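(* Let $\emptyset\neq\Lambda'\subseteq\mathbb{R}$, let $A$ be a closed linear operator on $X$, and let $(R(t))_{t>0}\subseteq L(X)$ be a strongly continuous operator family such that $R(t)A\subseteq AR(t)$ for all $t>0$ and $\int_0^\infty\|R(t)\|\,dt<\infty$. Let $f:\mathbb{R}\to X$ be bounded, continuous and Levitan $(x,\Lambda',A,\mathcal{P}_K)$-almost periodic (resp. bounded, continuous and Bebutov $(x,\Lambda',A,\mathcal{P}_K)$-uniformly recurrent), and suppose that $f(t)\in D(A)$ for all $t\in\mathbb{R}$ and the function $Af:\mathbb{R}\to X$ is bounded. Then the function $F:\mathbb{R}\to X$, $F(t):=\int_{-\infty}^tR(t-s)f(s)\,ds$, is bounded, continuous and Levitan $(x,\Lambda',A,\mathcal{P}_K)$-almost periodic (resp. bounded, continuous and Bebutov $(x,\Lambda',A,\mathcal{P}_K)$-uniformly recurrent).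
   Context: $(X,\|\cdot\|)$ is a complex Banach space and $L(X)$ the bounded linear operators on $X$. For each non-empty compact $K\subseteq\mathbb{R}$, $\mathcal{P}_K=C(K)$ with the sup-metric. For $g:\mathbb{R}\to X$ with $g(t)\in D(A)$ for all $t$: $g$ is Levitan $(x,\Lambda',A,\mathcal{P}_K)$-almost periodic iff for every $\epsilon>0$ and every non-empty compact $K\subseteq\mathbb{R}$ there is $l>0$ such that for each $t_0\in\Lambda'$ there is $\tau\in[t_0-l,t_0+l]\cap\Lambda'$ with $t\mapsto\|g(t+\tau)-Ag(t)\|$ belonging to $C(K)$ on $K$ and $\sup_{t\in K}\|g(t+\tau)-Ag(t)\|\le\epsilon$. $g$ is Bebutov $(x,\Lambda',A,\mathcal{P}_K)$-uniformly recurrent iff for every non-empty compact $K\subseteq\mathbb{R}$ there is a sequence $(\tau_k)$ in $\Lambda'$ with $|\tau_k|\to+\infty$ such that $t\mapsto\|g(t+\tau_k)-Ag(t)\|$ belongs to $C(K)$ on $K$ and $\lim_{k\to\infty}\sup_{t\in K}\|g(t+\tau_k)-Ag(t)\|=0$. *)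

theory Defs
  imports "HOL-Analysis.Analysis"
begin

definition closed_linear_operator :: "'x::banach set \<Rightarrow> ('x \<Rightarrow> 'x) \<Rightarrow> bool" where
  "closed_linear_operator D A \<longleftrightarrow>
     subspace D \<and>
     (\<forall>x\<in>D. \<forall>y\<in>D. A (x + y) = A x + A y) \<and>
     (\<forall>c. \<forall>x\<in>D. A (c *\<^sub>R x) = c *\<^sub>R A x) \<and>
     closed {(x, A x) | x. x \<in> D}"

text \<open>Levitan (x, Lambda', A, P_K)-almost periodicity, P_K = C(K) with the sup-metric.\<close>
definition levitan_ap ::
  "real set \<Rightarrow> 'x::banach set \<Rightarrow> ('x \<Rightarrow> 'x) \<Rightarrow> (real \<Rightarrow> 'x) \<Rightarrow> bool" where
  "levitan_ap \<Lambda> D A g \<longleftrightarrow>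
     (\<forall>t. g t \<in> D) \<and>
     (\<forall>\<epsilon>>0. \<forall>K. compact K \<and> K \<noteq> {} \<longrightarrow>
        (\<exists>l>0. \<forall>t0\<in>\<Lambda>. \<exists>\<tau>\<in>{t0 - l..t0 + l} \<inter> \<Lambda>.
            continuous_on K (\<lambda>t. norm (g (t + \<tau>) - A (g t))) \<and>
            (SUP t\<in>K. norm (g (t + \<tau>) - A (g t))) \<le> \<epsilon>))"

definition bebutov_ur ::
  "real set \<Rightarrow> 'x::banach set \<Rightarrow> ('x \<Rightarrow> 'x) \<Rightarrow> (real \<Rightarrow> 'x) \<Rightarrow> bool" where
  "bebutov_ur \<Lambda> D A g \<longleftrightarrow>
     (\<forall>t. g t \<in> D) \<and>
     (\<forall>K. compact K \<and> K \<noteq> {} \<longrightarrow>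
        (\<exists>\<tau>::nat \<Rightarrow> real. (\<forall>k. \<tau> k \<in> \<Lambda>) \<and>
            filterlim (\<lambda>k. \<bar>\<tau> k\<bar>) at_top sequentially \<and>
            (\<forall>k. continuous_on K (\<lambda>t. norm (g (t + \<tau> k) - A (g t)))) \<and>
            (\<lambda>k. SUP t\<in>K. norm (g (t + \<tau> k) - A (g t))) \<longlonglongrightarrow> 0))"

end

theory Submission
  imports Defs
begin


lemma uniform_bound:
  fixes T :: "real \<Rightarrow> 'a::banach \<Rightarrow> 'b::real_normed_vector"
  assumes C: "compact C" and bl: "\<And>r. r \<in> C \<Longrightarrow> bounded_linear (T r)"
    and ct: "\<And>x. continuous_on C (\<lambda>r. T r x)"
  shows "\<exists>B. \<forall>r\<in>C. \<forall>x. norm (T r x) \<le> B * norm x"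
proof -
  define E where "E n = {x. \<forall>r\<in>C. norm (T r x) \<le> real n}" for n :: nat
  have clE: "closed (E n)" for n
  proof -
    have "E n = (\<Inter>r\<in>C. {x. norm (T r x) \<le> real n})" by (auto simp: E_def)
    moreover have "closed {x. norm (T r x) \<le> real n}" if "r \<in> C" for r
    proof (rule closed_Collect_le)
      show "continuous_on UNIV (\<lambda>x. norm (T r x))"
        using bl[OF that] by (intro continuous_intros linear_continuous_on) 
    qed auto
    ultimately show ?thesis by auto
  qed
  have UE: "\<Union>(range E) = UNIV"
  proof -
    have "x \<in> \<Union>(range E)" for x
    proof -
    have "compact ((\<lambda>r. T r x) ` C)" by (rule compact_continuous_image[OF ct C])
    then obtain b where b: "\<forall>y\<in>(\<lambda>r. T r x) ` C. norm y \<le> b"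
      using compact_imp_bounded bounded_iff by metis
    obtain n where "b \<le> real n" using real_arch_simple by blast
    then have "x \<in> E n" using b by (force simp: E_def)
    then show "x \<in> \<Union>(range E)" by blast
  qed
  then show ?thesis by auto
  qed
  have "\<exists>n. interior (E n) \<noteq> {}"
  proof (rule ccontr)
    assume "\<not> ?thesis"
    then have "euclidean interior_of \<Union>(range E) = {}"
      by (intro Baire_category_alt) (auto simp: completely_metrizable_space_euclidean
           euclidean_interior_of clE closed_closedin[symmetric])
    then show False using UE by (simp add: euclidean_interior_of)
  qed
  then obtain n x0 where "x0 \<in> interior (E n)" by blast
  then obtain d where d: "d > 0" "ball x0 d \<subseteq> E n"
    by (meson open_contains_ball open_interior interior_subset subset_trans)
  have x0E: "x0 \<in> E n" using d by auto
  show ?thesis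
  proof (intro exI ballI allI)
    fix r x assume r: "r \<in> C"
    interpret L: bounded_linear "T r" by (rule bl[OF r])
    show "norm (T r x) \<le> (4 * real n / d) * norm x"
    proof (cases "x = 0")
      case True then show ?thesis by (simp add: L.zero)
    next
      case False
      define c where "c = d / (2 * norm x)"
      have c: "c > 0" using False d by (simp add: c_def)
      have "norm (c *\<^sub>R x) = d / 2" using False d by (simp add: c_def)
      then have "x0 + c *\<^sub>R x \<in> ball x0 d" using d by (simp add: dist_norm)
      then have "x0 + c *\<^sub>R x \<in> E n" using d by auto
      then have a1: "norm (T r (x0 + c *\<^sub>R x)) \<le> real n" using r by (auto simp: E_def)
      have a2: "norm (T r x0) \<le> real n" using x0E r by (auto simp: E_def)
      have "T r (c *\<^sub>R x) = T r (x0 + c *\<^sub>R x) - T r x0" by (simp add: L.add)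
      then have "norm (T r (c *\<^sub>R x)) \<le> 2 * real n"
        using a1 a2 norm_triangle_ineq4[of "T r (x0 + c *\<^sub>R x)" "T r x0"] by simp
      then have "c * norm (T r x) \<le> 2 * real n" using c by (simp add: L.scale)
      then have "norm (T r x) \<le> 2 * real n / c" using c by (simp add: field_simps)
      also have "\<dots> = (4 * real n / d) * norm x" using False d by (simp add: c_def field_simps)
      finally show ?thesis .
    qed
  qed
qed

lemma has_integral_closed_subspace:
  fixes f :: "'a::euclidean_space \<Rightarrow> 'b::banach"
  assumes fI: "(f has_integral I) S" and V: "closed V" "subspace V"
    and fV: "\<And>x. x \<in> S \<Longrightarrow> f x \<in> V"
  shows "I \<in> V"
proof -
  have cb: "J \<in> V" if gJ: "(g has_integral J) (cbox a b)" and gV: "\<And>x. x \<in> cbox a b \<Longrightarrow> g x \<in> V"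
    for g :: "'a \<Rightarrow> 'b" and a b :: 'a and J
  proof -
    have "\<forall>e>0. \<exists>y\<in>V. dist y J < e"
    proof (intro allI impI)
      fix e :: real assume "e > 0"
      then obtain \<gamma> where "gauge \<gamma>" and \<gamma>: "\<And>\<D>. \<D> tagged_division_of (cbox a b) \<and> \<gamma> fine \<D> \<Longrightarrow>
          norm (sum (\<lambda>(x,K). Henstock_Kurzweil_Integration.content K *\<^sub>R g x) \<D> - J) < e"
        using gJ unfolding has_integral by meson
      obtain \<D> where D: "\<D> tagged_division_of (cbox a b)" "\<gamma> fine \<D>"
        using fine_division_exists[OF \<open>gauge \<gamma>\<close>] by blast
      have "sum (\<lambda>(x,K). Henstock_Kurzweil_Integration.content K *\<^sub>R g x) \<D> \<in> V"
      proof (rule real_vector.subspace_sum[OF V(2)])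
        fix p assume "p \<in> \<D>"
        then obtain x K where p: "p = (x,K)" "(x,K) \<in> \<D>" by (cases p) auto
        then have "x \<in> cbox a b" using tagged_division_ofD(2,3)[OF D(1) p(2)] by blast
        then show "(\<lambda>(x,K). Henstock_Kurzweil_Integration.content K *\<^sub>R g x) p \<in> V"
          using p gV V(2) by (simp add: real_vector.subspace_scale)
      qed
      then show "\<exists>y\<in>V. dist y J < e" using \<gamma> D by (auto simp: dist_norm)
    qed
    then show ?thesis using closed_approachable[OF V(1)] by blast
  qed
  show ?thesis
  proof (cases "\<exists>a b. S = cbox a b")
    case True
    then obtain a b where "S = cbox a b" by blast
    then show ?thesis using cb[OF fI[unfolded \<open>S = cbox a b\<close>]] fV by auto
  next
    case False
    have "\<forall>e>0. \<exists>y\<in>V. dist y I < e"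
    proof (intro allI impI)
      fix e :: real assume "e > 0"
      then obtain B where B: "B > 0" "\<forall>a b. ball 0 B \<subseteq> cbox a b \<longrightarrow>
          (\<exists>z. ((\<lambda>x. if x \<in> S then f x else 0) has_integral z) (cbox a b) \<and> norm (z - I) < e)"
        using has_integral_altD[OF fI False] by blast
      obtain c where "ball (0::'a) B \<subseteq> cbox (-c) c"
        using bounded_subset_cbox_symmetric[OF bounded_ball] by blast
      then obtain z where z: "((\<lambda>x. if x \<in> S then f x else 0) has_integral z) (cbox (-c) c)" "norm (z - I) < e"
        using B by blast
      have "z \<in> V"
        by (rule cb[OF z(1)]) (use fV V(2) real_vector.subspace_0 in auto)
      then show "\<exists>y\<in>V. dist y I < e" using z by (auto simp: dist_norm)
    qed
    then show ?thesis using closed_approachable[OF V(1)] by blast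
  qed
qed

lemma rsum_diff_le:
  fixes f g :: "'a::euclidean_space \<Rightarrow> 'b::banach"
  assumes D: "D tagged_division_of (cbox a b)" and le: "\<And>x. x \<in> cbox a b \<Longrightarrow> norm (f x - g x) \<le> k x"
  shows "norm ((\<Sum>(x,K)\<in>D. Henstock_Kurzweil_Integration.content K *\<^sub>R f x) - (\<Sum>(x,K)\<in>D. Henstock_Kurzweil_Integration.content K *\<^sub>R g x))
         \<le> (\<Sum>(x,K)\<in>D. Henstock_Kurzweil_Integration.content K * k x)"
proof -
  have "(\<Sum>(x,K)\<in>D. Henstock_Kurzweil_Integration.content K *\<^sub>R f x) - (\<Sum>(x,K)\<in>D. Henstock_Kurzweil_Integration.content K *\<^sub>R g x)
      = (\<Sum>(x,K)\<in>D. Henstock_Kurzweil_Integration.content K *\<^sub>R (f x - g x))"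
    by (simp add: sum_subtractf[symmetric] split_def scaleR_diff_right)
  also have "norm \<dots> \<le> (\<Sum>(x,K)\<in>D. norm (Henstock_Kurzweil_Integration.content K *\<^sub>R (f x - g x)))"
    unfolding split_def by (rule norm_sum)
  also have "\<dots> \<le> (\<Sum>(x,K)\<in>D. Henstock_Kurzweil_Integration.content K * k x)"
  proof (rule sum_mono)
    fix p assume "p \<in> D"
    then obtain x K where p: "p = (x,K)" "(x,K) \<in> D" by (cases p) auto
    then have "x \<in> cbox a b" using tagged_division_ofD(2,3)[OF D p(2)] by blast
    then show "(\<lambda>(x,K). norm (Henstock_Kurzweil_Integration.content K *\<^sub>R (f x - g x))) p
          \<le> (\<lambda>(x,K). Henstock_Kurzweil_Integration.content K * k x) p"
      using le p by (auto intro: mult_left_mono)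
  qed
  finally show ?thesis .
qed

lemma integrable_approx_cbox:
  fixes f :: "'a::euclidean_space \<Rightarrow> 'b::banach"
  assumes A: "\<And>e. e > 0 \<Longrightarrow> \<exists>g k. g integrable_on cbox a b \<and> k integrable_on cbox a b \<and>
              (\<forall>x\<in>cbox a b. norm (f x - g x) \<le> k x) \<and> integral (cbox a b) k < e"
  shows "f integrable_on cbox a b"
  unfolding integrable_Cauchy
proof (intro allI impI)
  fix e :: real assume e: "e > 0"
  then obtain g k where g: "g integrable_on cbox a b" and k: "k integrable_on cbox a b"
    and le: "\<forall>x\<in>cbox a b. norm (f x - g x) \<le> k x" and ki: "integral (cbox a b) k < e/5"
    using A[of "e/5"] by auto
  obtain \<gamma>1 where "gauge \<gamma>1" and \<gamma>1: "\<And>D1 D2. D1 tagged_division_of (cbox a b) \<and> \<gamma>1 fine D1 \<and>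
            D2 tagged_division_of (cbox a b) \<and> \<gamma>1 fine D2 \<Longrightarrow>
            norm ((\<Sum>(x,K)\<in>D1. Henstock_Kurzweil_Integration.content K *\<^sub>R g x) - (\<Sum>(x,K)\<in>D2. Henstock_Kurzweil_Integration.content K *\<^sub>R g x)) < e/5"
    using g e unfolding integrable_Cauchy by (meson divide_pos_pos zero_less_numeral)
  obtain \<gamma>2 where "gauge \<gamma>2" and \<gamma>2: "\<And>D. D tagged_division_of (cbox a b) \<and> \<gamma>2 fine D \<Longrightarrow>
            norm ((\<Sum>(x,K)\<in>D. Henstock_Kurzweil_Integration.content K *\<^sub>R k x) - integral (cbox a b) k) < e/5"
    using integrable_integral[OF k] e unfolding has_integral by (meson divide_pos_pos zero_less_numeral)
  have kb: "(\<Sum>(x,K)\<in>D. Henstock_Kurzweil_Integration.content K * k x) < 2*e/5"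
    if "D tagged_division_of (cbox a b)" "\<gamma>2 fine D" for D
  proof -
    have "norm ((\<Sum>(x,K)\<in>D. Henstock_Kurzweil_Integration.content K *\<^sub>R k x) - integral (cbox a b) k) < e/5"
      using \<gamma>2 that by blast
    then show ?thesis using ki by (simp add: split_def) (smt (verit))
  qed
  show "\<exists>\<gamma>. gauge \<gamma> \<and> (\<forall>D1 D2. D1 tagged_division_of cbox a b \<and> \<gamma> fine D1 \<and> D2 tagged_division_of cbox a b \<and> \<gamma> fine D2 \<longrightarrow>
            norm ((\<Sum>(x, K)\<in>D1. Henstock_Kurzweil_Integration.content K *\<^sub>R f x) - (\<Sum>(x, K)\<in>D2. Henstock_Kurzweil_Integration.content K *\<^sub>R f x)) < e)"
  proof (intro exI conjI allI impI)
    show "gauge (\<lambda>x. \<gamma>1 x \<inter> \<gamma>2 x)" using \<open>gauge \<gamma>1\<close> \<open>gauge \<gamma>2\<close> by (rule gauge_Int)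
    fix D1 D2 assume H: "D1 tagged_division_of cbox a b \<and> (\<lambda>x. \<gamma>1 x \<inter> \<gamma>2 x) fine D1 \<and> D2 tagged_division_of cbox a b \<and> (\<lambda>x. \<gamma>1 x \<inter> \<gamma>2 x) fine D2"
    then have H1: "D1 tagged_division_of cbox a b" "\<gamma>1 fine D1" "\<gamma>2 fine D1"
      and H2: "D2 tagged_division_of cbox a b" "\<gamma>1 fine D2" "\<gamma>2 fine D2"
      by (auto simp: fine_Int)
    let ?S = "\<lambda>D h. (\<Sum>(x, K)\<in>D. Henstock_Kurzweil_Integration.content K *\<^sub>R h x)"
    have n1: "norm (?S D1 f - ?S D1 g) < 2*e/5"
      using rsum_diff_le[OF H1(1), of f g k] le kb[OF H1(1) H1(3)] by force
    have n2: "norm (?S D2 f - ?S D2 g) < 2*e/5"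
      using rsum_diff_le[OF H2(1), of f g k] le kb[OF H2(1) H2(3)] by force
    have n3: "norm (?S D1 g - ?S D2 g) < e/5" using \<gamma>1 H1 H2 by blast
    have "norm (?S D1 f - ?S D2 f) \<le> norm (?S D1 f - ?S D1 g) + norm (?S D1 g - ?S D2 g) + norm (?S D2 f - ?S D2 g)"
    proof -
      have "?S D1 f - ?S D2 f = ((?S D1 f - ?S D1 g) + (?S D1 g - ?S D2 g)) - (?S D2 f - ?S D2 g)"
        by (simp add: algebra_simps)
      then have "norm (?S D1 f - ?S D2 f) \<le> norm ((?S D1 f - ?S D1 g) + (?S D1 g - ?S D2 g)) + norm (?S D2 f - ?S D2 g)"
        by (metis norm_triangle_ineq4)
      moreover have "norm ((?S D1 f - ?S D1 g) + (?S D1 g - ?S D2 g)) \<le> norm (?S D1 f - ?S D1 g) + norm (?S D1 g - ?S D2 g)"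
        by (rule norm_triangle_ineq)
      ultimately show ?thesis by linarith
    qed
    then show "norm (?S D1 f - ?S D2 f) < e" using n1 n2 n3 by linarith
  qed
qed

lemma norm_tri3:
  fixes x y z w :: "'b::real_normed_vector"
  shows "norm (x - z) \<le> norm (x - y) + norm (y - w) + norm (z - w)"
proof -
  have "x - z = ((x - y) + (y - w)) - (z - w)" by (simp add: algebra_simps)
  then have "norm (x - z) \<le> norm ((x - y) + (y - w)) + norm (z - w)"
    by (metis norm_triangle_ineq4)
  moreover have "norm ((x - y) + (y - w)) \<le> norm (x - y) + norm (y - w)"
    by (rule norm_triangle_ineq)
  ultimately show ?thesis by linarith
qed

lemma integrable_approx:
  fixes f :: "'a::euclidean_space \<Rightarrow> 'b::banach"
  assumes A: "\<And>e. e > 0 \<Longrightarrow> \<exists>g k. g integrable_on S \<and> k integrable_on S \<and>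
              (\<forall>x\<in>S. norm (f x - g x) \<le> k x) \<and> integral S k < e"
  shows "f integrable_on S"
proof -
  let ?r = "\<lambda>h x. if x \<in> S then h x else 0"
  have key: "?r g integrable_on cbox a b \<and> ?r k integrable_on cbox a b \<and>
     (\<forall>x\<in>cbox a b. norm (?r f x - ?r g x) \<le> ?r k x) \<and> integral (cbox a b) (?r k) \<le> integral S k"
    if g: "g integrable_on S" and k: "k integrable_on S" and le: "\<forall>x\<in>S. norm (f x - g x) \<le> k x"
    for g :: "'a \<Rightarrow> 'b" and k :: "'a \<Rightarrow> real" and a b :: 'a
  proof (intro conjI)
    show "?r g integrable_on cbox a b" by (rule integrable_altD(1)[OF g])
    show kc: "?r k integrable_on cbox a b" by (rule integrable_altD(1)[OF k])
    show "\<forall>x\<in>cbox a b. norm (?r f x - ?r g x) \<le> ?r k x" using le by auto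
    have "k integrable_on S \<inter> cbox a b" using kc integrable_restrict_Int by blast
    moreover have "\<forall>x\<in>S. 0 \<le> k x"
    proof
      fix x assume "x \<in> S"
      then have "norm (f x - g x) \<le> k x" using le by blast
      then show "0 \<le> k x" using norm_ge_zero[of "f x - g x"] by linarith
    qed
    ultimately have "integral (S \<inter> cbox a b) k \<le> integral S k"
      by (intro integral_subset_le k) auto
    then show "integral (cbox a b) (?r k) \<le> integral S k" by (simp add: integral_restrict_Int)
  qed
  have P1: "?r f integrable_on cbox a b" for a b :: 'a
  proof (rule integrable_approx_cbox)
    fix e :: real assume "e > 0"
    then obtain g k where g: "g integrable_on S" and k: "k integrable_on S"
      and le: "\<forall>x\<in>S. norm (f x - g x) \<le> k x" and ki: "integral S k < e"
      using A by blast
    note K = key[OF g k le, of a b]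
    show "\<exists>g k. g integrable_on cbox a b \<and> k integrable_on cbox a b \<and>
              (\<forall>x\<in>cbox a b. norm (?r f x - g x) \<le> k x) \<and> integral (cbox a b) k < e"
    proof (intro exI[of _ "?r g"] exI[of _ "?r k"] conjI)
      show "integral (cbox a b) (?r k) < e" using K ki by linarith
    qed (use K in blast)+
  qed
  have P3: "norm (integral (cbox a b) (?r f) - integral (cbox a b) (?r g)) \<le> integral S k"
    if g: "g integrable_on S" and k: "k integrable_on S" and le: "\<forall>x\<in>S. norm (f x - g x) \<le> k x"
    for g :: "'a \<Rightarrow> 'b" and k :: "'a \<Rightarrow> real" and a b :: 'a
  proof -
    note K = key[OF g k le, of a b]
    have "integral (cbox a b) (?r f) - integral (cbox a b) (?r g) = integral (cbox a b) (\<lambda>x. ?r f x - ?r g x)"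
      using P1 K by (simp add: integral_diff)
    also have "norm \<dots> \<le> integral (cbox a b) (?r k)"
      using P1 K by (intro integral_norm_bound_integral integrable_diff) auto
    also have "\<dots> \<le> integral S k" using K by blast
    finally show ?thesis .
  qed
  show ?thesis
    unfolding integrable_alt[of f S]
  proof (intro conjI allI impI)
    fix a b :: 'a show "?r f integrable_on cbox a b" by (rule P1)
  next
    fix e :: real assume e: "e > 0"
    then obtain g k where g: "g integrable_on S" and k: "k integrable_on S"
      and le: "\<forall>x\<in>S. norm (f x - g x) \<le> k x" and ki: "integral S k < e/3"
      using A[of "e/3"] by auto
    obtain B where B: "B > 0" "\<forall>a b c d. ball 0 B \<subseteq> cbox a b \<and> ball 0 B \<subseteq> cbox c d \<longrightarrow>
      norm (integral (cbox a b) (?r g) - integral (cbox c d) (?r g)) < e/3"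
      using integrable_altD(2)[OF g, of "e/3"] e by auto
    show "\<exists>B>0. \<forall>a b c d. ball 0 B \<subseteq> cbox a b \<and> ball 0 B \<subseteq> cbox c d \<longrightarrow>
           norm (integral (cbox a b) (?r f) - integral (cbox c d) (?r f)) < e"
    proof (intro exI[of _ B] conjI allI impI)
      fix a b c d :: 'a assume H: "ball 0 B \<subseteq> cbox a b \<and> ball 0 B \<subseteq> cbox c d"
      let ?fab = "integral (cbox a b) (?r f)" and ?gab = "integral (cbox a b) (?r g)"
      let ?fcd = "integral (cbox c d) (?r f)" and ?gcd = "integral (cbox c d) (?r g)"
      have n1: "norm (?fab - ?gab) < e/3" using P3[OF g k le, of a b] ki by linarith
      have n2: "norm (?fcd - ?gcd) < e/3" using P3[OF g k le, of c d] ki by linarith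
      have n3: "norm (?gab - ?gcd) < e/3" using B H by blast
      have "norm (?fab - ?fcd) \<le> norm (?fab - ?gab) + norm (?gab - ?gcd) + norm (?fcd - ?gcd)"
        by (rule norm_tri3)
      then show "norm (?fab - ?fcd) < e" using n1 n2 n3 by linarith
    next
      show "B > 0" by (rule B(1))
    qed
  qed
qed

lemma ball_sub_cbox_real:
  fixes a b B :: real
  assumes "B > 0"
  shows "ball 0 B \<subseteq> cbox a b \<longleftrightarrow> a \<le> -B \<and> B \<le> b"
proof
  assume H: "ball 0 B \<subseteq> cbox a b"
  have "a \<le> -B"
  proof (rule ccontr)
    assume "\<not> a \<le> -B"
    define x where "x = (-B + min a B) / 2"
    have m1: "min a B > -B" using \<open>\<not> a \<le> -B\<close> assms by simp
    have m2: "min a B \<le> a" "min a B \<le> B" by simp_all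
    have "dist 0 x < B" unfolding dist_real_def x_def using m1 m2 assms by simp
    then have "x \<in> ball 0 B" by simp
    moreover have "x \<notin> cbox a b"
    proof -
      have "-B + min a B < 2 * a" using m1 m2 by linarith
      then have "x < a" unfolding x_def by (simp add: field_simps)
      then show ?thesis by auto
    qed
    ultimately show False using H by blast
  qed
  moreover have "B \<le> b"
  proof (rule ccontr)
    assume "\<not> B \<le> b"
    define x where "x = (B + max b (-B)) / 2"
    have m1: "max b (-B) < B" using \<open>\<not> B \<le> b\<close> assms by simp
    have m2: "max b (-B) \<ge> b" "max b (-B) \<ge> -B" by simp_all
    have "dist 0 x < B" unfolding dist_real_def x_def using m1 m2 assms by simp
    then have "x \<in> ball 0 B" by simp
    moreover have "x \<notin> cbox a b"
    proof -
      have "B + max b (-B) > 2 * b" using m1 m2 by linarith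
      then have "x > b" unfolding x_def by (simp add: field_simps)
      then show ?thesis by auto
    qed
    ultimately show False using H by blast
  qed
  ultimately show "a \<le> -B \<and> B \<le> b" by blast
next
  assume "a \<le> -B \<and> B \<le> b"
  then show "ball 0 B \<subseteq> cbox a b" by (auto simp: dist_real_def)
qed

lemma has_integral_reflect_shift:
  fixes \<phi> :: "real \<Rightarrow> 'b::banach"
  assumes \<phi>: "(\<phi> has_integral I) {0<..}"
  shows "((\<lambda>s. \<phi> (t - s)) has_integral I) {..<t}"
proof -
  have nc1: "\<not> (\<exists>a b. {0<..} = cbox a (b::real))"
  proof
    assume "\<exists>a b. {0<..} = cbox a (b::real)"
    then obtain a b where ab: "{0<..} = cbox a (b::real)" by blast
    have "max b 0 + 1 \<in> cbox a b" unfolding ab[symmetric] by auto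
    then show False by auto
  qed
  have nc2: "\<not> (\<exists>a b. {..<t} = cbox a (b::real))"
  proof
    assume "\<exists>a b. {..<t} = cbox a (b::real)"
    then obtain a b where ab: "{..<t} = cbox a (b::real)" by blast
    have "min a t - 1 \<in> cbox a b" unfolding ab[symmetric] by auto
    then show False by auto
  qed
  show ?thesis
  proof (subst has_integral_alt, simp only: if_not_P[OF nc2], intro allI impI)
    fix e :: real assume "e > 0"
    obtain B where B: "B > 0" "\<forall>a b. ball 0 B \<subseteq> cbox a b \<longrightarrow>
      (\<exists>z. ((\<lambda>x. if x \<in> {0<..} then \<phi> x else 0) has_integral z) (cbox a b) \<and> norm (z - I) < e)"
      using has_integral_altD[OF \<phi> nc1 \<open>e > 0\<close>] by blast
    show "\<exists>B>0. \<forall>a b. ball 0 B \<subseteq> cbox a b \<longrightarrow>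
           (\<exists>z. ((\<lambda>x. if x \<in> {..<t} then \<phi> (t - x) else 0) has_integral z) (cbox a b) \<and> norm (z - I) < e)"
    proof (intro exI[of _ "B + \<bar>t\<bar> + 1"] conjI allI impI)
      show "B + \<bar>t\<bar> + 1 > 0" using B by simp
      fix a b :: real assume "ball 0 (B + \<bar>t\<bar> + 1) \<subseteq> cbox a b"
      then have ab: "a \<le> -(B + \<bar>t\<bar> + 1)" "B + \<bar>t\<bar> + 1 \<le> b"
        using ball_sub_cbox_real[of "B + \<bar>t\<bar> + 1" a b] B by auto
      have bb: "ball 0 B \<subseteq> cbox (t - b) (t - a)"
        using ball_sub_cbox_real[of B "t - b" "t - a"] B ab by auto
      then obtain z where z: "((\<lambda>x. if x \<in> {0<..} then \<phi> x else 0) has_integral z) {t - b..t - a}"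
        "norm (z - I) < e"
        using B(2)[rule_format, OF bb] by auto
      let ?\<psi> = "\<lambda>x. if x \<in> {0<..} then \<phi> x else 0"
      have "((\<lambda>x. ?\<psi> (-x)) has_integral z) {-(t - a)..-(t - b)}"
        by (rule has_integral_reflect_real[of ?\<psi> z "t - a" "t - b", THEN iffD2, OF z(1)])
      then have "((\<lambda>x. (\<lambda>x. ?\<psi> (-x)) (x + (-t))) has_integral z) {-(t - a) - (-t)..-(t - b) - (-t)}"
        by (rule has_integral_shift_real_ivl)
      moreover have "{-(t - a) - (-t)..-(t - b) - (-t)} = cbox a b" by simp
      moreover have "(\<lambda>x. (\<lambda>x. ?\<psi> (-x)) (x + (-t))) = (\<lambda>x. if x \<in> {..<t} then \<phi> (t - x) else 0)"
      proof
        fix x :: real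
        have "-(x + -t) = t - x" by simp
        then show "(\<lambda>x. ?\<psi> (-x)) (x + (-t)) = (if x \<in> {..<t} then \<phi> (t - x) else 0)"
          by simp
      qed
      ultimately have "((\<lambda>x. if x \<in> {..<t} then \<phi> (t - x) else 0) has_integral z) (cbox a b)"
        by simp
      then show "\<exists>z. ((\<lambda>x. if x \<in> {..<t} then \<phi> (t - x) else 0) has_integral z) (cbox a b) \<and> norm (z - I) < e"
        using z(2) by blast
    qed
  qed
qed

lemma integral_closed_op:
  fixes A :: "'x::banach \<Rightarrow> 'x" and \<phi> \<psi> :: "real \<Rightarrow> 'x"
  assumes cl: "closed_linear_operator D A"
    and \<phi>: "(\<phi> has_integral I) S" and \<psi>: "(\<psi> has_integral J) S"
    and D: "\<And>x. x \<in> S \<Longrightarrow> \<phi> x \<in> D \<and> A (\<phi> x) = \<psi> x"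
  shows "I \<in> D \<and> A I = J"
proof -
  define V where "V = {(x, A x) | x. x \<in> D}"
  have sD: "subspace D" and add: "\<And>x y. x \<in> D \<Longrightarrow> y \<in> D \<Longrightarrow> A (x + y) = A x + A y"
    and sc: "\<And>c x. x \<in> D \<Longrightarrow> A (c *\<^sub>R x) = c *\<^sub>R A x" and clV: "closed V"
    using cl unfolding closed_linear_operator_def V_def by auto
  have "subspace V"
    unfolding subspace_def
  proof (intro conjI ballI allI)
    have "0 \<in> D" using sD by (simp add: subspace_0)
    moreover have "A 0 = 0" using sc[of 0 0] \<open>0 \<in> D\<close> by simp
    ultimately show "0 \<in> V" unfolding V_def by (metis (mono_tags, lifting) mem_Collect_eq zero_prod_def)
  next
    fix p q assume "p \<in> V" "q \<in> V"
    then obtain x y where "p = (x, A x)" "x \<in> D" "q = (y, A y)" "y \<in> D" unfolding V_def by blast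
    then show "p + q \<in> V" unfolding V_def using add[of x y] sD
      by (auto simp: subspace_add intro!: exI[of _ "x + y"])
  next
    fix c :: real and p assume "p \<in> V"
    then obtain x where "p = (x, A x)" "x \<in> D" unfolding V_def by blast
    then show "c *\<^sub>R p \<in> V" unfolding V_def using sc[of x c] sD
      by (auto simp: subspace_scale intro!: exI[of _ "c *\<^sub>R x"])
  qed
  have l1: "bounded_linear (\<lambda>v::'x. (v, 0::'x))"
    by (intro bounded_linear_Pair bounded_linear_ident bounded_linear_zero)
  have l2: "bounded_linear (\<lambda>v::'x. (0::'x, v))"
    by (intro bounded_linear_Pair bounded_linear_ident bounded_linear_zero)
  have "((\<lambda>x. (\<phi> x, 0::'x)) has_integral (I, 0)) S"
    using has_integral_linear[OF \<phi> l1] by (simp add: o_def)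
  moreover have "((\<lambda>x. (0::'x, \<psi> x)) has_integral (0, J)) S"
    using has_integral_linear[OF \<psi> l2] by (simp add: o_def)
  ultimately have "((\<lambda>x. (\<phi> x, 0::'x) + (0, \<psi> x)) has_integral ((I, 0) + (0, J))) S"
    by (rule has_integral_add)
  then have "((\<lambda>x. (\<phi> x, \<psi> x)) has_integral (I, J)) S" by simp
  then have "(I, J) \<in> V"
    by (rule has_integral_closed_subspace[OF _ clV \<open>subspace V\<close>]) (use D in \<open>auto simp: V_def\<close>)
  then show ?thesis unfolding V_def by auto
qed


locale kern =
  fixes R :: "real \<Rightarrow> 'x::banach \<Rightarrow> 'x"
  assumes bl: "\<And>t. t > 0 \<Longrightarrow> bounded_linear (R t)"
    and sc: "\<And>x. continuous_on {0<..} (\<lambda>t. R t x)"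
    and hint: "(\<lambda>t. onorm (R t)) integrable_on {0<..}"
begin

lemma h_nn: "r > 0 \<Longrightarrow> 0 \<le> onorm (R r)"
  using onorm_pos_le[OF bl] .

lemma normR: "r > 0 \<Longrightarrow> norm (R r x) \<le> onorm (R r) * norm x"
  using onorm[OF bl] .

lemma Rdiff: "r > 0 \<Longrightarrow> R r (x - y) = R r x - R r y"
  using bl linear_diff bounded_linear.linear by blast

definition hI where "hI = integral {0<..} (\<lambda>r. onorm (R r))"
definition tl where "tl n = hI - integral {1/real (Suc n)..real (Suc n)} (\<lambda>r. onorm (R r))"

lemma hI_nn: "0 \<le> hI"
  unfolding hI_def by (rule integral_nonneg[OF hint]) (simp add: h_nn)

lemma int_sub: "0 < a \<Longrightarrow> (\<lambda>r. onorm (R r)) integrable_on {a..b}"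
proof -
  assume "0 < a"
  then have "cbox a b \<subseteq> {0<..}" by auto
  from integrable_on_subcbox[OF hint this] show ?thesis by simp
qed

lemma Sint: "{1/real (Suc n)..real (Suc n)} \<inter> {0<..} = {1/real (Suc n)..real (Suc n)}"
  by (auto simp: less_le_trans[of 0 "1/real (Suc n)"])

lemma hrestr_int: "(\<lambda>r. if r \<in> {1/real (Suc n)..real (Suc n)} then onorm (R r) else 0) integrable_on {0<..}"
  unfolding integrable_restrict_Int Sint by (rule int_sub) simp

lemma hrestr_integral: "integral {0<..} (\<lambda>r. if r \<in> {1/real (Suc n)..real (Suc n)} then onorm (R r) else 0)
    = integral {1/real (Suc n)..real (Suc n)} (\<lambda>r. onorm (R r))"
  unfolding integral_restrict_Int Sint ..

lemma eventually_in_ivl: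
  assumes "r > (0::real)"
  shows "eventually (\<lambda>k. r \<in> {1/real (Suc k)..real (Suc k)}) sequentially"
proof -
  obtain N :: nat where N: "r \<le> real N" "1 / r \<le> real N"
    using real_arch_simple[of "max r (1/r)"] by auto
  show ?thesis unfolding eventually_sequentially
  proof (intro exI[of _ N] allI impI)
    fix k assume "N \<le> k"
    then have k: "real N \<le> real k" by simp
    have "1 / r < real (Suc k)" using N k by simp
    then have "1 / real (Suc k) < r" using assms by (simp add: field_simps)
    moreover have "r \<le> real (Suc k)" using N k by simp
    ultimately show "r \<in> {1/real (Suc k)..real (Suc k)}" by simp
  qed
qed

lemma tl_lim: "tl \<longlonglongrightarrow> 0"
proof -
  let ?f = "\<lambda>k r. if r \<in> {1/real (Suc k)..real (Suc k)} then onorm (R r) else 0"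
  have "(\<lambda>k. integral {0<..} (?f k)) \<longlonglongrightarrow> integral {0<..} (\<lambda>r. onorm (R r))"
  proof (rule dominated_convergence(2))
    show "?f k integrable_on {0<..}" for k by (rule hrestr_int)
    show "(\<lambda>r. onorm (R r)) integrable_on {0<..}" by (rule hint)
    show "norm (?f k r) \<le> onorm (R r)" if "r \<in> {0<..}" for k r
      using h_nn[of r] that by auto
    show "(\<lambda>k. ?f k r) \<longlonglongrightarrow> onorm (R r)" if "r \<in> {0<..}" for r
    proof -
      have ev: "eventually (\<lambda>k. r \<in> {1/real (Suc k)..real (Suc k)}) sequentially"
        using eventually_in_ivl that by simp
      have "eventually (\<lambda>k. ?f k r = onorm (R r)) sequentially"
        by (rule eventually_mono[OF ev]) simp
      then show ?thesis by (rule tendsto_eventually)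
    qed
  qed
  then have "(\<lambda>k. hI - integral {0<..} (?f k)) \<longlonglongrightarrow> hI - hI"
    unfolding hI_def by (intro tendsto_diff tendsto_const)
  then show ?thesis unfolding tl_def hrestr_integral by simp
qed

lemma tl_nn: "0 \<le> tl n"
proof -
  have "integral {1/real (Suc n)..real (Suc n)} (\<lambda>r. onorm (R r)) \<le> hI"
    unfolding hI_def hrestr_integral[symmetric]
    by (rule integral_le[OF hrestr_int hint]) (use h_nn in auto)
  then show ?thesis unfolding tl_def by simp
qed

lemma cont_prod:
  assumes yc: "continuous_on {0<..} y"
  shows "continuous_on {0<..} (\<lambda>r. R r (y r))"
proof -
  have "isCont (\<lambda>r. R r (y r)) r0" if r0: "r0 > 0" for r0
  proof -
    let ?C = "{r0/2..2*r0}"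
    have Cs: "?C \<subseteq> {0<..}" using r0 by auto
    obtain B where B: "\<forall>r\<in>?C. \<forall>x. norm (R r x) \<le> B * norm x"
    proof -
      have "\<exists>B. \<forall>r\<in>?C. \<forall>x. norm (R r x) \<le> B * norm x"
      proof (rule uniform_bound)
        show "compact ?C" by simp
        show "bounded_linear (R r)" if "r \<in> ?C" for r using that Cs bl by auto
        show "continuous_on ?C (\<lambda>r. R r x)" for x by (rule continuous_on_subset[OF sc Cs])
      qed
      then show ?thesis using that by blast
    qed
    have ev: "eventually (\<lambda>r. r \<in> ?C) (at r0)"
      unfolding eventually_at
      by (rule exI[of _ "r0/2"]) (use r0 in \<open>auto simp: dist_real_def abs_if split: if_split_asm\<close>)
    have yt: "(y \<longlongrightarrow> y r0) (at r0)"
      using yc r0 by (simp add: continuous_on_eq_continuous_at isCont_def)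
    have Rt: "((\<lambda>r. R r (y r0)) \<longlongrightarrow> R r0 (y r0)) (at r0)"
      using sc[of "y r0"] r0 by (simp add: continuous_on_eq_continuous_at isCont_def)
    have g0: "((\<lambda>r. B * norm (y r - y r0) + norm (R r (y r0) - R r0 (y r0))) \<longlongrightarrow> 0) (at r0)"
    proof -
      have "((\<lambda>r. y r - y r0) \<longlongrightarrow> 0) (at r0)" using yt by (rule LIM_zero)
      then have a: "((\<lambda>r. B * norm (y r - y r0)) \<longlongrightarrow> 0) (at r0)"
        by (intro tendsto_mult_right_zero tendsto_norm_zero)
      have "((\<lambda>r. R r (y r0) - R r0 (y r0)) \<longlongrightarrow> 0) (at r0)" using Rt by (rule LIM_zero)
      then have b: "((\<lambda>r. norm (R r (y r0) - R r0 (y r0))) \<longlongrightarrow> 0) (at r0)"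
        by (rule tendsto_norm_zero)
      show ?thesis using tendsto_add_zero[OF a b] .
    qed
    have "eventually (\<lambda>r. norm (R r (y r) - R r0 (y r0)) \<le> B * norm (y r - y r0) + norm (R r (y r0) - R r0 (y r0))) (at r0)"
    proof (rule eventually_mono[OF ev])
      fix r assume r: "r \<in> ?C"
      then have "r > 0" using r0 by auto
      have "R r (y r) - R r0 (y r0) = R r (y r - y r0) + (R r (y r0) - R r0 (y r0))"
        using Rdiff[OF \<open>r > 0\<close>] by simp
      then have "norm (R r (y r) - R r0 (y r0)) \<le> norm (R r (y r - y r0)) + norm (R r (y r0) - R r0 (y r0))"
        by (metis norm_triangle_ineq)
      also have "\<dots> \<le> B * norm (y r - y r0) + norm (R r (y r0) - R r0 (y r0))"
        using B r by auto
      finally show "norm (R r (y r) - R r0 (y r0)) \<le> B * norm (y r - y r0) + norm (R r (y r0) - R r0 (y r0))" .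
    qed
    then have "((\<lambda>r. R r (y r) - R r0 (y r0)) \<longlongrightarrow> 0) (at r0)"
      using g0 by (rule Lim_null_comparison)
    then show ?thesis unfolding isCont_def by (rule LIM_zero_cancel)
  qed
  then show ?thesis by (intro continuous_at_imp_continuous_on) auto
qed

lemma k_has_integral:
  "((\<lambda>r. c * onorm (R r) + d * (onorm (R r) - (if r \<in> {1/real (Suc n)..real (Suc n)} then onorm (R r) else 0)))
     has_integral (c * hI + d * tl n)) {0<..}"
proof -
  have h: "((\<lambda>r. onorm (R r)) has_integral hI) {0<..}"
    unfolding hI_def using hint by (rule integrable_integral)
  have h2: "((\<lambda>r. if r \<in> {1/real (Suc n)..real (Suc n)} then onorm (R r) else 0) has_integral
      integral {1/real (Suc n)..real (Suc n)} (\<lambda>r. onorm (R r))) {0<..}"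
    unfolding hrestr_integral[symmetric] using hrestr_int by (rule integrable_integral)
  have "((\<lambda>r. onorm (R r) - (if r \<in> {1/real (Suc n)..real (Suc n)} then onorm (R r) else 0)) has_integral tl n) {0<..}"
    unfolding tl_def by (rule has_integral_diff[OF h h2])
  from has_integral_add[OF has_integral_mult_right[OF h, of c] has_integral_mult_right[OF this, of d]]
  show ?thesis .
qed

lemma int_prod:
  assumes yc: "continuous_on {0<..} y" and yb: "\<And>r. r > 0 \<Longrightarrow> norm (y r) \<le> M"
  shows "(\<lambda>r. R r (y r)) integrable_on {0<..}"
proof (rule integrable_approx)
  fix e :: real assume e: "e > 0"
  define M' where "M' = max M 0"
  have M': "M' \<ge> 0" "\<And>r. r > 0 \<Longrightarrow> norm (y r) \<le> M'" using yb by (auto simp: M'_def intro: le_max_iff_disj[THEN iffD2])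
  have "(\<lambda>n. M' * tl n) \<longlonglongrightarrow> M' * 0" by (intro tendsto_mult tendsto_const tl_lim)
  then have "eventually (\<lambda>n. M' * tl n < e) sequentially" using e by (intro order_tendstoD(2)) auto
  then obtain n where n: "M' * tl n < e" by (auto simp: eventually_sequentially)
  let ?I = "{1/real (Suc n)..real (Suc n)}"
  let ?g = "\<lambda>r. if r \<in> ?I then R r (y r) else 0"
  let ?k = "\<lambda>r. 0 * onorm (R r) + M' * (onorm (R r) - (if r \<in> ?I then onorm (R r) else 0))"
  have kI: "(?k has_integral (0 * hI + M' * tl n)) {0<..}" by (rule k_has_integral)
  show "\<exists>g k. g integrable_on {0<..} \<and> k integrable_on {0<..} \<and>
              (\<forall>x\<in>{0<..}. norm (R x (y x) - g x) \<le> k x) \<and> integral {0<..} k < e"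
  proof (intro exI[of _ ?g] exI[of _ ?k] conjI ballI)
    have "continuous_on ?I (\<lambda>r. R r (y r))"
      by (rule continuous_on_subset[OF cont_prod[OF yc]]) (auto simp: less_le_trans[of 0 "1/real (Suc n)"])
    then have "(\<lambda>r. R r (y r)) integrable_on ?I" by (rule integrable_continuous_interval)
    then show "?g integrable_on {0<..}" unfolding integrable_restrict_Int Sint .
    show "?k integrable_on {0<..}" using kI by blast
    show "integral {0<..} ?k < e" using n by (subst integral_unique[OF kI]) simp
    fix r :: real assume r: "r \<in> {0<..}"
    show "norm (R r (y r) - ?g r) \<le> ?k r"
    proof (cases "r \<in> ?I")
      case True then show ?thesis by simp
    next
      case False
      have g0: "?g r = 0" by (simp only: if_not_P[OF False])
      have "norm (R r (y r)) \<le> onorm (R r) * norm (y r)" using normR r by auto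
      also have "\<dots> \<le> onorm (R r) * M'" using M' r h_nn[of r] by (auto intro: mult_left_mono)
      also have "\<dots> = ?k r" by (simp only: if_not_P[OF False]) simp
      finally show ?thesis by (simp only: g0 diff_zero)
    qed
  qed
qed

lemma bound_prod:
  assumes yc: "continuous_on {0<..} y" and yb: "\<And>r. r > 0 \<Longrightarrow> norm (y r) \<le> C"
    and ye: "\<And>r. r \<in> {1/real (Suc n)..real (Suc n)} \<Longrightarrow> norm (y r) \<le> e"
  shows "norm (integral {0<..} (\<lambda>r. R r (y r))) \<le> e * hI + C * tl n"
proof -
  let ?I = "{1/real (Suc n)..real (Suc n)}"
  let ?k = "\<lambda>r. e * onorm (R r) + C * (onorm (R r) - (if r \<in> ?I then onorm (R r) else 0))"
  have kI: "(?k has_integral (e * hI + C * tl n)) {0<..}" by (rule k_has_integral)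
  have "(1::real) \<in> ?I" by (simp add: field_simps)
  then have e0: "0 \<le> e" using ye norm_ge_zero[of "y 1"] order_trans by blast
  have le: "norm (integral {0<..} (\<lambda>r. R r (y r))) \<le> integral {0<..} ?k"
  proof (rule integral_norm_bound_integral)
    show "(\<lambda>r. R r (y r)) integrable_on {0<..}" by (rule int_prod[OF yc yb])
    show "?k integrable_on {0<..}" using kI by blast
    fix r :: real assume r: "r \<in> {0<..}"
    have hr: "0 \<le> onorm (R r)" using h_nn r by auto
    show "norm (R r (y r)) \<le> ?k r"
    proof (cases "r \<in> ?I")
      case True
      have "norm (R r (y r)) \<le> onorm (R r) * norm (y r)" using normR r by auto
      also have "\<dots> \<le> onorm (R r) * e" using ye[OF True] hr by (auto intro: mult_left_mono)
      also have "\<dots> = ?k r" using True by simp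
      finally show ?thesis .
    next
      case False
      have "norm (R r (y r)) \<le> onorm (R r) * norm (y r)" using normR r by auto
      also have "\<dots> \<le> onorm (R r) * C" using yb r hr by (auto intro: mult_left_mono)
      also have "\<dots> \<le> ?k r" using e0 hr by (simp only: if_not_P[OF False]) (simp add: algebra_simps)
      finally show ?thesis .
    qed
  qed
  moreover have "integral {0<..} ?k = e * hI + C * tl n" by (rule integral_unique[OF kI])
  ultimately show ?thesis by linarith
qed

end




context kern begin

lemma int_diff:
  assumes c1: "continuous_on {0<..} y1" and b1: "\<And>r. r > 0 \<Longrightarrow> norm (y1 r) \<le> M1"
    and c2: "continuous_on {0<..} y2" and b2: "\<And>r. r > 0 \<Longrightarrow> norm (y2 r) \<le> M2"
  shows "integral {0<..} (\<lambda>r. R r (y1 r)) - integral {0<..} (\<lambda>r. R r (y2 r))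
       = integral {0<..} (\<lambda>r. R r (y1 r - y2 r))"
proof -
  have "integral {0<..} (\<lambda>r. R r (y1 r)) - integral {0<..} (\<lambda>r. R r (y2 r))
      = integral {0<..} (\<lambda>r. R r (y1 r) - R r (y2 r))"
    by (rule integral_diff[OF int_prod[OF c1 b1] int_prod[OF c2 b2], symmetric])
  also have "\<dots> = integral {0<..} (\<lambda>r. R r (y1 r - y2 r))"
    by (rule integral_cong) (simp add: Rdiff)
  finally show ?thesis .
qed

definition G where "G y t = integral {0<..} (\<lambda>r. R r (y (t - r)))"

lemma shift_cont:
  fixes y :: "real \<Rightarrow> 'b::topological_space" and t :: real
  assumes "continuous_on UNIV y"
  shows "continuous_on S (\<lambda>r. y (t - r))"
proof -
  have "continuous_on S (\<lambda>r. t - r)" by (intro continuous_intros)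
  from continuous_on_compose2[OF assms this] show ?thesis by auto
qed

lemma G_int:
  assumes "continuous_on UNIV y" "\<And>s. norm (y s) \<le> C"
  shows "(\<lambda>r. R r (y (t - r))) integrable_on {0<..}"
  by (rule int_prod[OF shift_cont[OF assms(1)]]) (use assms(2) in auto)

lemma G_bounded:
  assumes yc: "continuous_on UNIV y" and yb: "\<And>s. norm (y s) \<le> C"
  shows "norm (G y t) \<le> C * hI"
proof -
  have "norm (G y t) \<le> integral {0<..} (\<lambda>r. C * onorm (R r))"
    unfolding G_def
  proof (rule integral_norm_bound_integral[OF G_int[OF yc yb]])
    show "(\<lambda>r. C * onorm (R r)) integrable_on {0<..}" using hint by (rule integrable_on_mult_right)
    fix r :: real assume "r \<in> {0<..}"
    then have "norm (R r (y (t - r))) \<le> onorm (R r) * norm (y (t - r))" using normR by auto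
    also have "\<dots> \<le> onorm (R r) * C" using yb h_nn \<open>r \<in> {0<..}\<close> by (auto intro: mult_left_mono)
    finally show "norm (R r (y (t - r))) \<le> C * onorm (R r)" by (simp add: mult.commute)
  qed
  also have "\<dots> = C * hI" unfolding hI_def by simp
  finally show ?thesis .
qed

lemma G_cont:
  assumes yc: "continuous_on UNIV y" and yb: "\<And>s. norm (y s) \<le> C"
  shows "continuous_on UNIV (G y)"
  unfolding continuous_on_iff
proof (intro ballI allI impI)
  fix t0 :: real and e :: real assume e: "e > 0"
  have C0: "0 \<le> C" using yb[of 0] norm_ge_zero order_trans by blast
  have "(\<lambda>n. 2 * C * tl n) \<longlonglongrightarrow> 2 * C * 0" by (intro tendsto_mult tendsto_const tl_lim)
  then have "eventually (\<lambda>n. 2 * C * tl n < e/2) sequentially" using e by (intro order_tendstoD(2)) auto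
  then obtain n where n: "2 * C * tl n < e/2" by (auto simp: eventually_sequentially)
  define e' where "e' = e / (2 * (hI + 1))"
  have e': "e' > 0" "e' * hI < e/2" using e hI_nn by (auto simp: e'_def field_simps)
  define K where "K = {t0 - real (Suc n) - 1 .. t0 + 1}"
  have "uniformly_continuous_on K y"
    by (rule compact_uniformly_continuous[OF continuous_on_subset[OF yc]]) (auto simp: K_def)
  then obtain d0 where d0: "d0 > 0" "\<And>x x'. x \<in> K \<Longrightarrow> x' \<in> K \<Longrightarrow> dist x' x < d0 \<Longrightarrow> dist (y x') (y x) < e'"
    unfolding uniformly_continuous_on_def using e' by metis
  show "\<exists>d>0. \<forall>t\<in>UNIV. dist t t0 < d \<longrightarrow> dist (G y t) (G y t0) < e"
  proof (intro exI[of _ "min d0 1"] conjI ballI impI)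
    show "min d0 1 > 0" using d0 by simp
    fix t :: real assume "dist t t0 < min d0 1"
    then have tt: "\<bar>t - t0\<bar> < d0" "\<bar>t - t0\<bar> < 1" by (auto simp: dist_real_def)
    have "G y t - G y t0 = integral {0<..} (\<lambda>r. R r (y (t - r) - y (t0 - r)))"
      unfolding G_def by (rule int_diff[OF shift_cont[OF yc] _ shift_cont[OF yc]]) (use yb in auto)
    also have "norm \<dots> \<le> e' * hI + (2 * C) * tl n"
    proof (rule bound_prod)
      show "continuous_on {0<..} (\<lambda>r. y (t - r) - y (t0 - r))"
        by (intro continuous_on_diff shift_cont[OF yc])
      show "norm (y (t - r) - y (t0 - r)) \<le> 2 * C" for r
        using norm_triangle_ineq4[of "y (t - r)" "y (t0 - r)"] yb[of "t - r"] yb[of "t0 - r"] by simp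
      fix r assume r: "r \<in> {1/real (Suc n)..real (Suc n)}"
      have r0: "0 < r" using r by (auto simp: less_le_trans[of 0 "1/real (Suc n)"])
      have "t - r \<in> K" "t0 - r \<in> K" using r r0 tt by (auto simp: K_def)
      moreover have "dist (t - r) (t0 - r) < d0" using tt by (simp add: dist_real_def)
      ultimately have "dist (y (t - r)) (y (t0 - r)) < e'" using d0 by blast
      then show "norm (y (t - r) - y (t0 - r)) \<le> e'" by (simp add: dist_norm)
    qed
    finally show "dist (G y t) (G y t0) < e" using e' n by (simp add: dist_norm)
  qed
qed

lemma key_est:
  assumes fc: "continuous_on UNIV f" and fb: "\<And>s. norm (f s) \<le> C1"
    and gc: "continuous_on UNIV g" and gb: "\<And>s. norm (g s) \<le> C2"
    and H: "\<And>r. r \<in> {1/real (Suc n)..real (Suc n)} \<Longrightarrow> norm (f (t - r + \<tau>) - g (t - r)) \<le> e"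
  shows "norm (G f (t + \<tau>) - G g t) \<le> e * hI + (C1 + C2) * tl n"
proof -
  have fc': "continuous_on UNIV (\<lambda>s. f (s + \<tau>))"
    by (rule continuous_on_compose2[OF fc]) (auto intro!: continuous_intros)
  have eq: "G f (t + \<tau>) = integral {0<..} (\<lambda>r. R r (f (t - r + \<tau>)))"
    unfolding G_def by (simp add: algebra_simps)
  have "G f (t + \<tau>) - G g t = integral {0<..} (\<lambda>r. R r (f (t - r + \<tau>))) - integral {0<..} (\<lambda>r. R r (g (t - r)))"
    by (simp only: eq G_def[of g])
  also have "\<dots> = integral {0<..} (\<lambda>r. R r (f (t - r + \<tau>) - g (t - r)))"
    by (rule int_diff[OF shift_cont[OF fc'] _ shift_cont[OF gc]]) (use fb gb in auto)
  also have "norm \<dots> \<le> e * hI + (C1 + C2) * tl n"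
  proof (rule bound_prod)
    show "continuous_on {0<..} (\<lambda>r. f (t - r + \<tau>) - g (t - r))"
      by (intro continuous_on_diff shift_cont[OF fc'] shift_cont[OF gc])
    show "norm (f (t - r + \<tau>) - g (t - r)) \<le> C1 + C2" for r
      using norm_triangle_ineq4[of "f (t - r + \<tau>)" "g (t - r)"] fb[of "t - r + \<tau>"] gb[of "t - r"] by simp
    show "norm (f (t - r + \<tau>) - g (t - r)) \<le> e" if "r \<in> {1/real (Suc n)..real (Suc n)}" for r
      using H that .
  qed
  finally show ?thesis .
qed

lemma key_cont:
  assumes fc: "continuous_on UNIV f" and fb: "\<And>s. norm (f s) \<le> C1"
    and gc: "continuous_on UNIV g" and gb: "\<And>s. norm (g s) \<le> C2"
  shows "continuous_on K (\<lambda>t. norm (G f (t + \<tau>) - G g t))"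
proof -
  have "continuous_on UNIV (\<lambda>t. G f (t + \<tau>))"
    by (rule continuous_on_compose2[OF G_cont[OF fc fb]]) (auto intro!: continuous_intros)
  then have "continuous_on UNIV (\<lambda>t. norm (G f (t + \<tau>) - G g t))"
    by (intro continuous_on_norm continuous_on_diff G_cont[OF gc gb])
  then show ?thesis by (rule continuous_on_subset) auto
qed

end

lemma sup_bound:
  fixes \<phi> :: "real \<Rightarrow> real"
  assumes "compact K" "continuous_on K \<phi>" "x \<in> K" "(SUP t\<in>K. \<phi> t) \<le> e"
  shows "\<phi> x \<le> e"
proof -
  have "bounded (\<phi> ` K)" using compact_continuous_image[OF assms(2,1)] compact_imp_bounded by blast
  then have "bdd_above (\<phi> ` K)" by (rule bounded_imp_bdd_above)
  then have "\<phi> x \<le> (SUP t\<in>K. \<phi> t)" using assms(3) by (rule cSUP_upper[rotated])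
  then show ?thesis using assms(4) by linarith
qed

lemma sup_nonneg:
  fixes \<phi> :: "real \<Rightarrow> real"
  assumes "compact K" "continuous_on K \<phi>" "K \<noteq> {}" "\<And>t. t \<in> K \<Longrightarrow> 0 \<le> \<phi> t"
  shows "0 \<le> (SUP t\<in>K. \<phi> t)"
proof -
  obtain x where x: "x \<in> K" using assms(3) by blast
  have "bounded (\<phi> ` K)" using compact_continuous_image[OF assms(2,1)] compact_imp_bounded by blast
  then have "bdd_above (\<phi> ` K)" by (rule bounded_imp_bdd_above)
  then have "\<phi> x \<le> (SUP t\<in>K. \<phi> t)" using x by (rule cSUP_upper[rotated])
  then show ?thesis using assms(4)[OF x] by linarith
qed

lemma Kshift:
  fixes K :: "real set" and n :: nat
  assumes "compact K" "K \<noteq> {}"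
  defines "K' \<equiv> (\<lambda>p. fst p - snd p) ` (K \<times> {1/real (Suc n)..real (Suc n)})"
  shows "compact K'" "K' \<noteq> {}" "\<And>t r. t \<in> K \<Longrightarrow> r \<in> {1/real (Suc n)..real (Suc n)} \<Longrightarrow> t - r \<in> K'"
proof -
  show "compact K'" unfolding K'_def
    by (rule compact_continuous_image) (auto intro!: continuous_intros compact_Times assms(1))
  have one: "(1::real) \<in> {1/real (Suc n)..real (Suc n)}" by (simp add: field_simps)
  obtain x where x: "x \<in> K" using assms(2) by blast
  have "(x, 1) \<in> K \<times> {1/real (Suc n)..real (Suc n)}" using x one by (simp only: mem_Times_iff fst_conv snd_conv)
  then have "x - 1 \<in> K'" unfolding K'_def by (rule rev_image_eqI) simp
  then show "K' \<noteq> {}" by blast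
  fix t r assume "t \<in> K" "r \<in> {1/real (Suc n)..real (Suc n)}"
  then show "t - r \<in> K'" unfolding K'_def by (intro image_eqI[of _ _ "(t, r)"]) auto
qed

lemma cont_from_approx:
  fixes u :: "real \<Rightarrow> 'a::real_normed_vector"
  assumes H: "\<And>t0 e. e > 0 \<Longrightarrow> \<exists>g. continuous_on UNIV g \<and> (\<forall>t\<in>{t0-1..t0+1}. norm (g t - u t) \<le> e)"
  shows "continuous_on UNIV u"
  unfolding continuous_on_iff
proof (intro ballI allI impI)
  fix t0 e :: real assume e: "e > 0"
  obtain g where gc: "continuous_on UNIV g" and gu: "\<forall>t\<in>{t0-1..t0+1}. norm (g t - u t) \<le> e/4"
    using H[of "e/4" t0] e by auto
  obtain d where d: "d > 0" "\<forall>t\<in>UNIV. dist t t0 < d \<longrightarrow> dist (g t) (g t0) < e/4"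
  proof -
    have e4: "e/4 > 0" using e by simp
    have "\<forall>x\<in>UNIV. \<forall>e>0. \<exists>d>0. \<forall>x'\<in>UNIV. dist x' x < d \<longrightarrow> dist (g x') (g x) < e"
      using gc continuous_on_iff by blast
    then show ?thesis using that e4 by blast
  qed
  show "\<exists>d>0. \<forall>t\<in>UNIV. dist t t0 < d \<longrightarrow> dist (u t) (u t0) < e"
  proof (intro exI[of _ "min d 1"] conjI ballI impI)
    show "min d 1 > 0" using d by simp
    fix t :: real assume t: "dist t t0 < min d 1"
    then have "t \<in> {t0-1..t0+1}" by (auto simp: dist_real_def)
    then have n1: "norm (u t - g t) \<le> e/4" using gu by (metis norm_minus_commute)
    have n2: "norm (g t - g t0) < e/4" using d t by (simp add: dist_norm)
    have "t0 \<in> {t0-1..t0+1}" by simp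
    then have n3: "norm (u t0 - g t0) \<le> e/4" using gu by (metis norm_minus_commute)
    have "norm (u t - u t0) \<le> norm (u t - g t) + norm (g t - g t0) + norm (u t0 - g t0)"
      by (rule norm_tri3)
    then have "norm (u t - u t0) < e" using n1 n2 n3 e by linarith
    then show "dist (u t) (u t0) < e" by (simp add: dist_norm)
  qed
qed

theorem proposition3p1:
  fixes \<Lambda> :: "real set" and D :: "'x::banach set" and A :: "'x \<Rightarrow> 'x"
    and R :: "real \<Rightarrow> 'x \<Rightarrow> 'x" and f :: "real \<Rightarrow> 'x"
  assumes "\<Lambda> \<noteq> {}"
    and "closed_linear_operator D A"
    and "\<And>t. t > 0 \<Longrightarrow> bounded_linear (R t)"
    and "\<And>x. continuous_on {0<..} (\<lambda>t. R t x)"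
    and "\<And>t x. t > 0 \<Longrightarrow> x \<in> D \<Longrightarrow> R t x \<in> D \<and> A (R t x) = R t (A x)"
    and "(\<lambda>t. onorm (R t)) integrable_on {0<..}"
    and "bounded (range f)" and "continuous_on UNIV f"
    and "\<And>t. f t \<in> D"
    and "bounded (range (\<lambda>t. A (f t)))"
  defines "F \<equiv> (\<lambda>t. integral {..<t} (\<lambda>s. R (t - s) (f s)))"
  shows "(\<forall>t. (\<lambda>s. R (t - s) (f s)) integrable_on {..<t})
      \<and> (levitan_ap \<Lambda> D A f \<longrightarrow>
           bounded (range F) \<and> continuous_on UNIV F \<and> levitan_ap \<Lambda> D A F)
      \<and> (bebutov_ur \<Lambda> D A f \<longrightarrow>
           bounded (range F) \<and> continuous_on UNIV F \<and> bebutov_ur \<Lambda> D A F)"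
proof -
  interpret K: kern R by (rule kern.intro) (use assms(3,4,6) in auto)
  have fc: "continuous_on UNIV f" by (rule assms(8))
  obtain C1 where C1: "\<And>s. norm (f s) \<le> C1" using assms(7) unfolding bounded_iff by blast
  obtain C2 where C2: "\<And>s. norm (A (f s)) \<le> C2" using assms(10) unfolding bounded_iff by blast
  let ?I = "\<lambda>n. {1/real (Suc n)..real (Suc n)}"
  have FG: "((\<lambda>s. R (t - s) (f s)) has_integral K.G f t) {..<t}" for t
  proof -
    have "((\<lambda>r. R r (f (t - r))) has_integral K.G f t) {0<..}"
      unfolding K.G_def by (rule integrable_integral[OF K.G_int[OF fc C1]])
    from has_integral_reflect_shift[OF this, of t] show ?thesis by simp
  qed
  have Feq: "F t = K.G f t" for t unfolding F_def using FG by (rule integral_unique)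
  have Fint: "\<forall>t. (\<lambda>s. R (t - s) (f s)) integrable_on {..<t}" using FG by blast
  have AF: "F t \<in> D \<and> A (F t) = K.G (\<lambda>s. A (f s)) t" if gc: "continuous_on UNIV (\<lambda>s. A (f s))" for t
  proof -
    have "K.G f t \<in> D \<and> A (K.G f t) = K.G (\<lambda>s. A (f s)) t"
      unfolding K.G_def
    proof (rule integral_closed_op[OF assms(2)])
      show "((\<lambda>r. R r (f (t - r))) has_integral integral {0<..} (\<lambda>r. R r (f (t - r)))) {0<..}"
        by (rule integrable_integral[OF K.G_int[OF fc C1]])
      show "((\<lambda>r. R r (A (f (t - r)))) has_integral integral {0<..} (\<lambda>r. R r (A (f (t - r))))) {0<..}"
        by (rule integrable_integral[OF K.G_int[OF gc C2]])
      fix r :: real assume "r \<in> {0<..}"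
      then show "R r (f (t - r)) \<in> D \<and> A (R r (f (t - r))) = R r (A (f (t - r)))"
        using assms(5) assms(9) by auto
    qed
    then show ?thesis using Feq by simp
  qed
  have Fbd: "bounded (range F)"
    unfolding bounded_iff using K.G_bounded[OF fc C1] Feq by auto
  have FeqF: "F = K.G f" by (rule ext) (rule Feq)
  have Fcont: "continuous_on UNIV F"
    unfolding FeqF by (rule K.G_cont[OF fc C1])
  have est: "norm (F (t + \<tau>) - A (F t)) \<le> e * K.hI + (C1 + C2) * K.tl n"
    if gc: "continuous_on UNIV (\<lambda>s. A (f s))"
      and H: "\<And>r. r \<in> ?I n \<Longrightarrow> norm (f (t - r + \<tau>) - A (f (t - r))) \<le> e" for t \<tau> e n
    using K.key_est[OF fc C1 gc C2, of n t \<tau> e] H AF[OF gc, of t] Feq by simp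
  have contK: "continuous_on K (\<lambda>t. norm (F (t + \<tau>) - A (F t)))"
    if gc: "continuous_on UNIV (\<lambda>s. A (f s))" for K \<tau>
    using K.key_cont[OF fc C1 gc C2, of K \<tau>] AF[OF gc] Feq by simp
  have lev: "bounded (range F) \<and> continuous_on UNIV F \<and> levitan_ap \<Lambda> D A F"
    if L: "levitan_ap \<Lambda> D A f"
  proof -
    have L2: "\<forall>\<epsilon>>0. \<forall>K. compact K \<and> K \<noteq> {} \<longrightarrow>
        (\<exists>l>0. \<forall>t0\<in>\<Lambda>. \<exists>\<tau>\<in>{t0 - l..t0 + l} \<inter> \<Lambda>.
            continuous_on K (\<lambda>t. norm (f (t + \<tau>) - A (f t))) \<and>
            (SUP t\<in>K. norm (f (t + \<tau>) - A (f t))) \<le> \<epsilon>)"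
      using L unfolding levitan_ap_def by blast
    obtain t1 where t1: "t1 \<in> \<Lambda>" using assms(1) by blast
    have gc: "continuous_on UNIV (\<lambda>s. A (f s))"
    proof (rule cont_from_approx)
      fix t0 e :: real assume e: "e > 0"
      have KK: "compact {t0-1..t0+1} \<and> {t0-1..t0+1} \<noteq> {}" by simp
      obtain l where "l > 0" and l: "\<forall>s0\<in>\<Lambda>. \<exists>\<tau>\<in>{s0 - l..s0 + l} \<inter> \<Lambda>.
            continuous_on {t0-1..t0+1} (\<lambda>t. norm (f (t + \<tau>) - A (f t))) \<and>
            (SUP t\<in>{t0-1..t0+1}. norm (f (t + \<tau>) - A (f t))) \<le> e"
        using L2[rule_format, OF e KK] by blast
      then obtain \<tau> where \<tau>: "continuous_on {t0-1..t0+1} (\<lambda>t. norm (f (t + \<tau>) - A (f t)))"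
        "(SUP t\<in>{t0-1..t0+1}. norm (f (t + \<tau>) - A (f t))) \<le> e"
        using l[rule_format, OF t1] by blast
      show "\<exists>g. continuous_on UNIV g \<and> (\<forall>t\<in>{t0-1..t0+1}. norm (g t - A (f t)) \<le> e)"
      proof (intro exI[of _ "\<lambda>t. f (t + \<tau>)"] conjI ballI)
        show "continuous_on UNIV (\<lambda>t. f (t + \<tau>))"
          by (rule continuous_on_compose2[OF fc]) (auto intro!: continuous_intros)
        fix t assume "t \<in> {t0-1..t0+1}"
        then show "norm (f (t + \<tau>) - A (f t)) \<le> e"
          by (rule sup_bound[OF compact_Icc \<tau>(1) _ \<tau>(2)])
      qed
    qed
    have "levitan_ap \<Lambda> D A F"
      unfolding levitan_ap_def
    proof (intro conjI allI impI)
      show "F t \<in> D" for t using AF[OF gc] by blast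
      fix \<epsilon> :: real and K :: "real set"
      assume \<epsilon>: "\<epsilon> > 0" and K: "compact K \<and> K \<noteq> {}"
      have "(\<lambda>n. (C1 + C2) * K.tl n) \<longlonglongrightarrow> (C1 + C2) * 0" by (intro tendsto_mult tendsto_const K.tl_lim)
      then have "eventually (\<lambda>n. (C1 + C2) * K.tl n < \<epsilon>/2) sequentially" using \<epsilon> by (intro order_tendstoD(2)) auto
      then obtain n where n: "(C1 + C2) * K.tl n < \<epsilon>/2" by (auto simp: eventually_sequentially)
      define e' where "e' = \<epsilon> / (2 * (K.hI + 1))"
      have e': "e' > 0" "e' * K.hI < \<epsilon>/2" using \<epsilon> K.hI_nn by (auto simp: e'_def field_simps)
      define K' where "K' = (\<lambda>p. fst p - snd p) ` (K \<times> ?I n)"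
      have KS: "compact K'" "K' \<noteq> {}" "\<And>t r. t \<in> K \<Longrightarrow> r \<in> ?I n \<Longrightarrow> t - r \<in> K'"
        using Kshift[where K=K and n=n] K unfolding K'_def by blast+
      obtain l where "l > 0" and l: "\<forall>t0\<in>\<Lambda>. \<exists>\<tau>\<in>{t0 - l..t0 + l} \<inter> \<Lambda>.
            continuous_on K' (\<lambda>t. norm (f (t + \<tau>) - A (f t))) \<and>
            (SUP t\<in>K'. norm (f (t + \<tau>) - A (f t))) \<le> e'"
        using L2[rule_format, OF e'(1) conjI[OF KS(1,2)]] by blast
      show "\<exists>l>0. \<forall>t0\<in>\<Lambda>. \<exists>\<tau>\<in>{t0 - l..t0 + l} \<inter> \<Lambda>.
            continuous_on K (\<lambda>t. norm (F (t + \<tau>) - A (F t))) \<and>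
            (SUP t\<in>K. norm (F (t + \<tau>) - A (F t))) \<le> \<epsilon>"
      proof (intro exI[of _ l] conjI ballI)
        show "l > 0" by fact
        fix t0 assume "t0 \<in> \<Lambda>"
        then obtain \<tau> where \<tau>I: "\<tau> \<in> {t0 - l..t0 + l} \<inter> \<Lambda>"
          and \<tau>: "continuous_on K' (\<lambda>t. norm (f (t + \<tau>) - A (f t)))"
            "(SUP t\<in>K'. norm (f (t + \<tau>) - A (f t))) \<le> e'"
          using l[rule_format, OF \<open>t0 \<in> \<Lambda>\<close>] by blast
        show "\<exists>\<tau>\<in>{t0 - l..t0 + l} \<inter> \<Lambda>.
            continuous_on K (\<lambda>t. norm (F (t + \<tau>) - A (F t))) \<and>
            (SUP t\<in>K. norm (F (t + \<tau>) - A (F t))) \<le> \<epsilon>"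
        proof (intro bexI[OF _ \<tau>I] conjI)
          show "continuous_on K (\<lambda>t. norm (F (t + \<tau>) - A (F t)))" by (rule contK[OF gc])
          show "(SUP t\<in>K. norm (F (t + \<tau>) - A (F t))) \<le> \<epsilon>"
          proof (rule cSUP_least)
            show "K \<noteq> {}" using K by blast
            fix t assume t: "t \<in> K"
            have "norm (F (t + \<tau>) - A (F t)) \<le> e' * K.hI + (C1 + C2) * K.tl n"
            proof (rule est[OF gc])
              fix r assume "r \<in> ?I n"
              then have "t - r \<in> K'" using KS(3) t by blast
              then show "norm (f (t - r + \<tau>) - A (f (t - r))) \<le> e'"
                by (rule sup_bound[OF KS(1) \<tau>(1) _ \<tau>(2)])
            qed
            then show "norm (F (t + \<tau>) - A (F t)) \<le> \<epsilon>" using e' n by linarith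
          qed
        qed
      qed
    qed
    then show ?thesis using Fbd Fcont by blast
  qed
  have beb: "bounded (range F) \<and> continuous_on UNIV F \<and> bebutov_ur \<Lambda> D A F"
    if B: "bebutov_ur \<Lambda> D A f"
  proof -
    have B2: "\<forall>K. compact K \<and> K \<noteq> {} \<longrightarrow>
        (\<exists>\<tau>::nat \<Rightarrow> real. (\<forall>k. \<tau> k \<in> \<Lambda>) \<and>
            filterlim (\<lambda>k. \<bar>\<tau> k\<bar>) at_top sequentially \<and>
            (\<forall>k. continuous_on K (\<lambda>t. norm (f (t + \<tau> k) - A (f t)))) \<and>
            (\<lambda>k. SUP t\<in>K. norm (f (t + \<tau> k) - A (f t))) \<longlonglongrightarrow> 0)"
      using B unfolding bebutov_ur_def by blast
    have gc: "continuous_on UNIV (\<lambda>s. A (f s))"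
    proof (rule cont_from_approx)
      fix t0 e :: real assume e: "e > 0"
      have KK: "compact {t0-1..t0+1} \<and> {t0-1..t0+1} \<noteq> {}" by simp
      obtain \<tau> :: "nat \<Rightarrow> real" where
        \<tau>c: "\<forall>k. continuous_on {t0-1..t0+1} (\<lambda>t. norm (f (t + \<tau> k) - A (f t)))"
        and \<tau>l: "(\<lambda>k. SUP t\<in>{t0-1..t0+1}. norm (f (t + \<tau> k) - A (f t))) \<longlonglongrightarrow> 0"
        using B2[rule_format, OF KK] by blast
      have "eventually (\<lambda>k. (SUP t\<in>{t0-1..t0+1}. norm (f (t + \<tau> k) - A (f t))) < e) sequentially"
        using order_tendstoD(2)[OF \<tau>l] e by blast
      then obtain k where k: "(SUP t\<in>{t0-1..t0+1}. norm (f (t + \<tau> k) - A (f t))) < e"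
        by (auto simp: eventually_sequentially)
      show "\<exists>g. continuous_on UNIV g \<and> (\<forall>t\<in>{t0-1..t0+1}. norm (g t - A (f t)) \<le> e)"
      proof (intro exI[of _ "\<lambda>t. f (t + \<tau> k)"] conjI ballI)
        show "continuous_on UNIV (\<lambda>t. f (t + \<tau> k))"
          by (rule continuous_on_compose2[OF fc]) (auto intro!: continuous_intros)
        fix t assume "t \<in> {t0-1..t0+1}"
        then show "norm (f (t + \<tau> k) - A (f t)) \<le> e"
          by (rule sup_bound[OF compact_Icc \<tau>c[rule_format] _ less_imp_le[OF k]])
      qed
    qed
    have "bebutov_ur \<Lambda> D A F"
      unfolding bebutov_ur_def
    proof (intro conjI allI impI)
      show "F t \<in> D" for t using AF[OF gc] by blast
      fix K :: "real set" assume K: "compact K \<and> K \<noteq> {}"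
      define K' where "K' n = (\<lambda>p. fst p - snd p) ` (K \<times> ?I n)" for n
      have KS: "compact (K' n)" "K' n \<noteq> {}" "\<And>t r. t \<in> K \<Longrightarrow> r \<in> ?I n \<Longrightarrow> t - r \<in> K' n" for n
        using Kshift[where K=K and n=n] K unfolding K'_def by blast+
      have ex: "\<exists>\<sigma>. \<sigma> \<in> \<Lambda> \<and> real n \<le> \<bar>\<sigma>\<bar> \<and> continuous_on (K' n) (\<lambda>t. norm (f (t + \<sigma>) - A (f t))) \<and>
                 (SUP t\<in>K' n. norm (f (t + \<sigma>) - A (f t))) \<le> 1 / real (Suc n)" for n
      proof -
        obtain \<tau> :: "nat \<Rightarrow> real" where \<tau>\<Lambda>: "\<forall>k. \<tau> k \<in> \<Lambda>"
          and \<tau>f: "filterlim (\<lambda>k. \<bar>\<tau> k\<bar>) at_top sequentially"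
          and \<tau>c: "\<forall>k. continuous_on (K' n) (\<lambda>t. norm (f (t + \<tau> k) - A (f t)))"
          and \<tau>l: "(\<lambda>k. SUP t\<in>K' n. norm (f (t + \<tau> k) - A (f t))) \<longlonglongrightarrow> 0"
          using B2[rule_format, OF conjI[OF KS(1,2)]] by blast
        have ev1: "eventually (\<lambda>k. real n \<le> \<bar>\<tau> k\<bar>) sequentially"
          using \<tau>f unfolding filterlim_at_top by blast
        have ev2: "eventually (\<lambda>k. (SUP t\<in>K' n. norm (f (t + \<tau> k) - A (f t))) < 1 / real (Suc n)) sequentially"
          using order_tendstoD(2)[OF \<tau>l] by simp
        obtain k where "real n \<le> \<bar>\<tau> k\<bar>" "(SUP t\<in>K' n. norm (f (t + \<tau> k) - A (f t))) < 1 / real (Suc n)"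
          using eventually_conj[OF ev1 ev2] by (auto simp: eventually_sequentially)
        then show ?thesis using \<tau>\<Lambda> \<tau>c by (intro exI[of _ "\<tau> k"]) auto
      qed
      then have "\<forall>n. \<exists>\<sigma>. \<sigma> \<in> \<Lambda> \<and> real n \<le> \<bar>\<sigma>\<bar> \<and> continuous_on (K' n) (\<lambda>t. norm (f (t + \<sigma>) - A (f t))) \<and>
                 (SUP t\<in>K' n. norm (f (t + \<sigma>) - A (f t))) \<le> 1 / real (Suc n)" by blast
      from choice[OF this] obtain \<sigma> where \<sigma>all: "\<forall>n. \<sigma> n \<in> \<Lambda> \<and> real n \<le> \<bar>\<sigma> n\<bar> \<and> continuous_on (K' n) (\<lambda>t. norm (f (t + \<sigma> n) - A (f t))) \<and>
                 (SUP t\<in>K' n. norm (f (t + \<sigma> n) - A (f t))) \<le> 1 / real (Suc n)" by blast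
      have \<sigma>: "\<And>n. \<sigma> n \<in> \<Lambda>" "\<And>n. real n \<le> \<bar>\<sigma> n\<bar>"
        "\<And>n. continuous_on (K' n) (\<lambda>t. norm (f (t + \<sigma> n) - A (f t)))"
        "\<And>n. (SUP t\<in>K' n. norm (f (t + \<sigma> n) - A (f t))) \<le> 1 / real (Suc n)"
        using \<sigma>all by blast+
      show "\<exists>\<tau>::nat \<Rightarrow> real. (\<forall>k. \<tau> k \<in> \<Lambda>) \<and>
            filterlim (\<lambda>k. \<bar>\<tau> k\<bar>) at_top sequentially \<and>
            (\<forall>k. continuous_on K (\<lambda>t. norm (F (t + \<tau> k) - A (F t)))) \<and>
            (\<lambda>k. SUP t\<in>K. norm (F (t + \<tau> k) - A (F t))) \<longlonglongrightarrow> 0"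
      proof (intro exI[of _ \<sigma>] conjI allI)
        show "\<sigma> k \<in> \<Lambda>" for k by (rule \<sigma>(1))
        show "filterlim (\<lambda>k. \<bar>\<sigma> k\<bar>) at_top sequentially"
          unfolding filterlim_at_top
        proof
          fix Z :: real
          obtain N :: nat where "Z \<le> real N" using real_arch_simple by blast
          then show "eventually (\<lambda>k. Z \<le> \<bar>\<sigma> k\<bar>) sequentially"
            unfolding eventually_sequentially
          proof (intro exI[of _ N] allI impI)
            fix k assume "N \<le> k"
            then have "real N \<le> real k" by simp
            then show "Z \<le> \<bar>\<sigma> k\<bar>" using \<open>Z \<le> real N\<close> \<sigma>(2)[of k] by linarith
          qed
        qed
        show "continuous_on K (\<lambda>t. norm (F (t + \<sigma> k) - A (F t)))" for k by (rule contK[OF gc])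
        have inv: "(\<lambda>k. 1 / real (Suc k)) \<longlonglongrightarrow> 0"
          using LIMSEQ_inverse_real_of_nat by (simp add: inverse_eq_divide)
        have up: "(\<lambda>k. 1 / real (Suc k) * K.hI + (C1 + C2) * K.tl k) \<longlonglongrightarrow> 0 * K.hI + (C1 + C2) * 0"
          by (intro tendsto_add tendsto_mult inv tendsto_const K.tl_lim)
        show "(\<lambda>k. SUP t\<in>K. norm (F (t + \<sigma> k) - A (F t))) \<longlonglongrightarrow> 0"
        proof (rule tendsto_sandwich[of "\<lambda>_. 0" _ _ "\<lambda>k. 1 / real (Suc k) * K.hI + (C1 + C2) * K.tl k"])
          show "eventually (\<lambda>k. 0 \<le> (SUP t\<in>K. norm (F (t + \<sigma> k) - A (F t)))) sequentially"
            using K by (intro always_eventually allI sup_nonneg contK[OF gc]) auto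
          show "eventually (\<lambda>k. (SUP t\<in>K. norm (F (t + \<sigma> k) - A (F t))) \<le> 1 / real (Suc k) * K.hI + (C1 + C2) * K.tl k) sequentially"
          proof (intro always_eventually allI cSUP_least)
            fix k show "K \<noteq> {}" using K by blast
            fix t assume t: "t \<in> K"
            show "norm (F (t + \<sigma> k) - A (F t)) \<le> 1 / real (Suc k) * K.hI + (C1 + C2) * K.tl k"
            proof (rule est[OF gc])
              fix r assume "r \<in> ?I k"
              then have "t - r \<in> K' k" using KS(3) t by blast
              then show "norm (f (t - r + \<sigma> k) - A (f (t - r))) \<le> 1 / real (Suc k)"
                by (rule sup_bound[OF KS(1) \<sigma>(3) _ \<sigma>(4)])
            qed
          qed
          show "(\<lambda>_. 0::real) \<longlonglongrightarrow> 0" by simp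
          show "(\<lambda>k. 1 / real (Suc k) * K.hI + (C1 + C2) * K.tl k) \<longlonglongrightarrow> 0" using up by simp
        qed
      qed
    qed
    then show ?thesis using Fbd Fcont by blast
  qed
  show ?thesis using Fint lev beb by blast
qed


end
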